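(* Let $\Phi:B(H_{in})\to B(H_{out})$ be a quantum channel. Let $V=\mathrm{Range}\big((\mathrm{id}\otimes\pi_{op})(C_\Phi)\big)\subseteq H_{in}\otimes\overline{H_{out}}$, where $(\mathrm{id}\otimes\pi_{op})(C_\Phi)$ is regarded as a linear operator on $H_{in}\otimes\overline{H_{out}}$. Then, under the Hilbert space identification $B(H_{in})\otimes B(\overline{H_{out}})\cong (H_{in}\otimes\overline{H_{out}})\otimes(\overline{H_{in}}\otimes H_{out})$ given by $\theta_{\xi,\eta}\otimes\theta_{\overline{\zeta},\overline{\omega}}\mapsto(\xi\otimes\overline{\zeta})\otimes(\overline{\eta}\otimes\omega)$, one has $$(\mathrm{id}\otimes\pi_{op})(\tilde S_\Phi)\cong V\otimes\overline{V}.$$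
   Context: All Hilbert spaces are finite dimensional; inner products are linear in the second variable. $\theta_{\xi,\eta}(\eta')=\langle\eta,\eta'\rangle\xi$. A quantum channel is a trace-preserving completely positive map. $O=B(H_{out})$, and $O^{op}$ is its opposite algebra (product $a*b=ba$). $\overline{H}$ is the conjugate Hilbert space, $\xi\mapsto\overline{\xi}$ the antilinear identification; $\pi_{op}:O^{op}\to B(\overline{H_{out}})$ is the faithful representation $\pi_{op}(T)\overline{\xi}=\overline{T^*\xi}$. Let $\{e_i\}$ be an orthonormal basis of $H_{in}$ and $e_{ij}$ the matrix units. $C_\Phi=\sum_{i,j}e_{ij}\otimes\Phi(e_{ji})\in B(H_{in})\otimes O^{op}$. $\mathcal{M}_\Phi=H_{in}\otimes O^{op}$ is the right Hilbert $O^{op}$-module with $(\xi\otimes a)*x=\xi\otimes(a*x)$ and $\langle\xi\otimes a,\eta\otimes b\rangle_{O^{op}}=\langle\xi,\eta\rangle a^**b$, so that $\mathcal{L}(\mathcal{M}_\Phi)\cong B(H_{in})\otimes O^{op}$ and $C_\Phi\in\mathcal{L}(\mathcal{M}_\Phi)$. A Stinespring module related to $\Phi$ is a pair $(\mathcal{E},W)$, $\mathcal{E}$ a Hilbert $O^{op}$-module, $W$ an adjointable module map $\mathcal{M}_\Phi\to\mathcal{E}$ with $W^*W=C_\Phi$. The quantum confusability multigraph is $\tilde S_\Phi=W^*\mathcal{L}(\mathcal{E})W\subseteq B(H_{in})\otimes O^{op}$ (independent of the choice of Stinespring module). *)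

theory Defs
  imports Complex_Main "HOL-Library.Complex_Order"
begin

text \<open>Coordinates: H_in has orthonormal basis indexed by the finite type 'i,
  H_out by 'o. An operator on a space with basis indexed by 'a is a matrix
  'a => 'a => complex (row index first). The conjugate space of H_out uses the
  basis conj(e_o).\<close>

definition mat_unit :: "'a \<Rightarrow> 'a \<Rightarrow> ('a \<Rightarrow> 'a \<Rightarrow> complex)" where
  "mat_unit i j = (\<lambda>a b. if a = i \<and> b = j then 1 else 0)"

definition psd_on :: "'a set \<Rightarrow> ('a \<Rightarrow> 'a \<Rightarrow> complex) \<Rightarrow> bool" where
  "psd_on A M \<longleftrightarrow> (\<forall>v. 0 \<le> (\<Sum>x\<in>A. \<Sum>y\<in>A. cnj (v x) * M x y * v y))"

definition linear_map :: "(('i \<Rightarrow> 'i \<Rightarrow> complex) \<Rightarrow> ('o \<Rightarrow> 'o \<Rightarrow> complex)) \<Rightarrow> bool" where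
  "linear_map \<Phi> \<longleftrightarrow>
     (\<forall>a X Y. \<Phi> (\<lambda>r c. a * X r c + Y r c) = (\<lambda>r c. a * \<Phi> X r c + \<Phi> Y r c))"

text \<open>Complete positivity: Phi tensor id_{M_n} is positive for every n.\<close>
definition completely_positive :: "(('i \<Rightarrow> 'i \<Rightarrow> complex) \<Rightarrow> ('o \<Rightarrow> 'o \<Rightarrow> complex)) \<Rightarrow> bool" where
  "completely_positive \<Phi> \<longleftrightarrow>
     (\<forall>n::nat. \<forall>X :: 'i \<times> nat \<Rightarrow> 'i \<times> nat \<Rightarrow> complex.
        psd_on (UNIV \<times> {..<n}) X \<longrightarrow>
        psd_on (UNIV \<times> {..<n}) (\<lambda>(p, k) (q, k'). \<Phi> (\<lambda>i j. X (i, k) (j, k')) p q))"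

definition trace_preserving :: "(('i::finite \<Rightarrow> 'i \<Rightarrow> complex) \<Rightarrow> ('o::finite \<Rightarrow> 'o \<Rightarrow> complex)) \<Rightarrow> bool" where
  "trace_preserving \<Phi> \<longleftrightarrow> (\<forall>X. (\<Sum>p\<in>UNIV. \<Phi> X p p) = (\<Sum>i\<in>UNIV. X i i))"

definition quantum_channel :: "(('i::finite \<Rightarrow> 'i \<Rightarrow> complex) \<Rightarrow> ('o::finite \<Rightarrow> 'o \<Rightarrow> complex)) \<Rightarrow> bool" where
  "quantum_channel \<Phi> \<longleftrightarrow> linear_map \<Phi> \<and> completely_positive \<Phi> \<and> trace_preserving \<Phi>"

text \<open>Elements of B(H_a,H_b) tensor O are represented by their coefficients:
  x (b,p) (a,q) is the coefficient of e_{ba} tensor e_{pq}.\<close>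

text \<open>Product in B(H_b,H_c) tensor O^op times B(H_a,H_b) tensor O^op:
  (a tensor b) * (c tensor d) = ac tensor db.\<close>
definition opmul :: "('c \<times> 'o \<Rightarrow> 'b \<times> 'o \<Rightarrow> complex) \<Rightarrow> ('b::finite \<times> 'o::finite \<Rightarrow> 'a \<times> 'o \<Rightarrow> complex)
                      \<Rightarrow> ('c \<times> 'o \<Rightarrow> 'a \<times> 'o \<Rightarrow> complex)" where
  "opmul x y = (\<lambda>(c, p) (a, q). \<Sum>b\<in>UNIV. \<Sum>s\<in>UNIV. x (c, s) (b, q) * y (b, p) (a, s))"

definition adj :: "('b \<times> 'o \<Rightarrow> 'a \<times> 'o \<Rightarrow> complex) \<Rightarrow> ('a \<times> 'o \<Rightarrow> 'b \<times> 'o \<Rightarrow> complex)" where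
  "adj x = (\<lambda>(a, p) (b, q). cnj (x (b, q) (a, p)))"

text \<open>C_Phi = sum_{i,j} e_{ij} tensor Phi(e_{ji}).\<close>
definition choi_op :: "(('i \<Rightarrow> 'i \<Rightarrow> complex) \<Rightarrow> ('o \<Rightarrow> 'o \<Rightarrow> complex)) \<Rightarrow> ('i \<times> 'o \<Rightarrow> 'i \<times> 'o \<Rightarrow> complex)" where
  "choi_op \<Phi> = (\<lambda>(i, p) (j, q). \<Phi> (mat_unit j i) p q)"

text \<open>Stinespring module (E, W) with E = L tensor O^op (L a finite-dimensional
  Hilbert space with basis indexed by 'l), W in L(M_Phi, E) = B(H_in, L) tensor O^op,
  W^* W = C_Phi.\<close>
definition stinespring_map :: "(('i::finite \<Rightarrow> 'i \<Rightarrow> complex) \<Rightarrow> ('o::finite \<Rightarrow> 'o \<Rightarrow> complex))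
      \<Rightarrow> ('l::finite \<times> 'o \<Rightarrow> 'i \<times> 'o \<Rightarrow> complex) \<Rightarrow> bool" where
  "stinespring_map \<Phi> W \<longleftrightarrow> opmul (adj W) W = choi_op \<Phi>"

text \<open>Quantum confusability multigraph W^* L(E) W, with L(E) = B(L) tensor O^op.\<close>
definition conf_multigraph :: "(('i::finite \<Rightarrow> 'i \<Rightarrow> complex) \<Rightarrow> ('o::finite \<Rightarrow> 'o \<Rightarrow> complex))
      \<Rightarrow> ('l::finite \<times> 'o \<Rightarrow> 'i \<times> 'o \<Rightarrow> complex) \<Rightarrow> ('i \<times> 'o \<Rightarrow> 'i \<times> 'o \<Rightarrow> complex) set" where
  "conf_multigraph \<Phi> W =
     {opmul (opmul (adj W) X) W | X :: 'l \<times> 'o \<Rightarrow> 'l \<times> 'o \<Rightarrow> complex. True}"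

text \<open>pi_op(T) conj(xi) = conj(T^* xi); in the basis conj(e_o) its matrix is the
  transpose of T.\<close>
definition pi_op :: "('o \<Rightarrow> 'o \<Rightarrow> complex) \<Rightarrow> ('o \<Rightarrow> 'o \<Rightarrow> complex)" where
  "pi_op T = (\<lambda>p q. T q p)"

text \<open>(id tensor pi_op)(x), an operator on H_in tensor conj(H_out) (basis e_i tensor conj(e_p)).\<close>
definition id_pi_op :: "('i \<times> 'o \<Rightarrow> 'i \<times> 'o \<Rightarrow> complex) \<Rightarrow> ('i \<times> 'o \<Rightarrow> 'i \<times> 'o \<Rightarrow> complex)" where
  "id_pi_op x = (\<lambda>(i, p) (j, q). pi_op (\<lambda>a b. x (i, a) (j, b)) p q)"

definition range_op :: "('a \<Rightarrow> 'a::finite \<Rightarrow> complex) \<Rightarrow> ('a \<Rightarrow> complex) set" where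
  "range_op D = {(\<lambda>r. \<Sum>c\<in>UNIV. D r c * v c) | v. True}"

text \<open>Identification B(H_in) tensor B(conj H_out) = (H_in tensor conj H_out) tensor (conj H_in tensor H_out),
  theta_{xi,eta} tensor theta_{conj zeta, conj omega} |-> (xi tensor conj zeta) tensor (conj eta tensor omega).
  In coordinates (basis (e_i tensor conj e_p) tensor (conj e_j tensor e_q)) this is the
  identity on coefficients.\<close>
definition hs_ident :: "('a \<Rightarrow> 'a \<Rightarrow> complex) \<Rightarrow> ('a \<times> 'a \<Rightarrow> complex)" where
  "hs_ident Y = (\<lambda>(r, c). Y r c)"

text \<open>v tensor conj(w), conj(w) having coordinates cnj (w r) in the conjugate basis.\<close>
definition tensor_conj :: "('a \<Rightarrow> complex) \<Rightarrow> ('a \<Rightarrow> complex) \<Rightarrow> ('a \<times> 'a \<Rightarrow> complex)" where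
  "tensor_conj v w = (\<lambda>(r, c). v r * cnj (w c))"

definition cspan :: "('b \<Rightarrow> complex) set \<Rightarrow> ('b \<Rightarrow> complex) set" where
  "cspan S = {y. \<exists>F f. finite F \<and> F \<subseteq> S \<and> y = (\<lambda>t. \<Sum>x\<in>F. f x * x t)}"

definition tensor_with_conj :: "('a \<Rightarrow> complex) set \<Rightarrow> ('a \<times> 'a \<Rightarrow> complex) set" where
  "tensor_with_conj V = cspan {tensor_conj v w | v w. v \<in> V \<and> w \<in> V}"

end

theory Submission
  imports Defs "HOL-Analysis.Analysis"
begin

lemma decomp:
  fixes R :: "('n::finite \<Rightarrow> complex) set"
  assumes z: "(\<lambda>t. 0) \<in> R" and ad: "\<And>a b. a \<in> R \<Longrightarrow> b \<in> R \<Longrightarrow> (\<lambda>t. a t + b t) \<in> R"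
    and sc: "\<And>c a. a \<in> R \<Longrightarrow> (\<lambda>t. c * a t) \<in> R"
  obtains u z where "u \<in> R" "x = (\<lambda>t. u t + z t)"
    "\<And>w. w \<in> R \<Longrightarrow> Re (\<Sum>t\<in>UNIV. cnj (z t) * w t) = 0"
proof -
  let ?S = "(vec_lambda :: ('n\<Rightarrow>complex) \<Rightarrow> complex^'n) ` R"
  have "subspace ?S"
    unfolding subspace_def
  proof (intro conjI ballI allI)
    show "0 \<in> ?S" using z by (force simp: vec_eq_iff)
    fix a b assume "a \<in> ?S" "b \<in> ?S"
    then obtain a' b' where "a' \<in> R" "b' \<in> R" "a = vec_lambda a'" "b = vec_lambda b'" by auto
    then show "a + b \<in> ?S" using ad[of a' b'] by (force simp: vec_eq_iff intro!: image_eqI[where x="\<lambda>t. a' t + b' t"])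
  next
    fix c :: real and a assume "a \<in> ?S"
    then obtain a' where "a' \<in> R" "a = vec_lambda a'" by auto
    have "c *\<^sub>R a = vec_lambda (\<lambda>t. complex_of_real c * a' t)"
      using \<open>a = vec_lambda a'\<close> by (simp add: vec_eq_iff del: of_real_mult, simp add: scaleR_conv_of_real)
    then show "c *\<^sub>R a \<in> ?S" using sc[of a' "complex_of_real c"] \<open>a' \<in> R\<close> by simp
  qed
  then have sp: "span ?S = ?S" by (simp add: span_eq_iff)
  obtain y zz where y: "y \<in> span ?S" and o: "\<And>w. w \<in> span ?S \<Longrightarrow> orthogonal zz w"
    and e: "vec_lambda x = y + zz"
    using orthogonal_subspace_decomp_exists[of ?S "vec_lambda x"] by metis
  from y sp obtain u where u: "u \<in> R" "y = vec_lambda u" by auto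
  show ?thesis
  proof
    show "u \<in> R" by fact
    show "x = (\<lambda>t. u t + zz $ t)"
    proof
      fix t show "x t = u t + zz $ t" using arg_cong[OF e, of "\<lambda>v. v $ t"] u by simp
    qed
    fix w assume "w \<in> R"
    then have "orthogonal zz (vec_lambda w)" using o sp by auto
    then have "(\<Sum>t\<in>UNIV. zz $ t \<bullet> w t) = 0" by (simp add: orthogonal_def inner_vec_def)
    then show "Re (\<Sum>t\<in>UNIV. cnj (zz $ t) * w t) = 0" by (simp add: Re_sum inner_complex_def)
  qed
qed

definition mv :: "('r \<Rightarrow> 'c::finite \<Rightarrow> complex) \<Rightarrow> ('c \<Rightarrow> complex) \<Rightarrow> ('r \<Rightarrow> complex)" where
  "mv M v = (\<lambda>r. \<Sum>c\<in>UNIV. M r c * v c)"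
definition rng :: "('r \<Rightarrow> 'c::finite \<Rightarrow> complex) \<Rightarrow> ('r \<Rightarrow> complex) set" where
  "rng M = {mv M v | v. True}"
definition ct :: "('r \<Rightarrow> 'c \<Rightarrow> complex) \<Rightarrow> ('c \<Rightarrow> 'r \<Rightarrow> complex)" where
  "ct M = (\<lambda>r c. cnj (M c r))"
definition mm :: "('r \<Rightarrow> 'k::finite \<Rightarrow> complex) \<Rightarrow> ('k \<Rightarrow> 'c \<Rightarrow> complex) \<Rightarrow> ('r \<Rightarrow> 'c \<Rightarrow> complex)" where
  "mm X Y = (\<lambda>r c. \<Sum>k\<in>UNIV. X r k * Y k c)"

lemma mv_mm: "mv (mm X Y) v = mv X (mv Y v)"
proof
  fix r
  have "mv (mm X Y) v r = (\<Sum>c\<in>UNIV. \<Sum>k\<in>UNIV. X r k * Y k c * v c)"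
    unfolding mv_def mm_def by (simp add: sum_distrib_right)
  also have "\<dots> = (\<Sum>k\<in>UNIV. \<Sum>c\<in>UNIV. X r k * Y k c * v c)" by (rule sum.swap)
  also have "\<dots> = mv X (mv Y v) r"
    unfolding mv_def by (simp add: sum_distrib_left mult.assoc)
  finally show "mv (mm X Y) v r = mv X (mv Y v) r" .
qed

lemma adj_ident: "(\<Sum>t\<in>UNIV. cnj (z t) * mv A y t) = (\<Sum>k\<in>UNIV. cnj (mv (ct A) z k) * y k)"
proof -
  have "(\<Sum>t\<in>UNIV. cnj (z t) * mv A y t) = (\<Sum>t\<in>UNIV. \<Sum>k\<in>UNIV. cnj (z t) * A t k * y k)"
    unfolding mv_def by (simp add: sum_distrib_left mult.assoc)
  also have "\<dots> = (\<Sum>k\<in>UNIV. \<Sum>t\<in>UNIV. cnj (z t) * A t k * y k)" by (rule sum.swap)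
  also have "\<dots> = (\<Sum>k\<in>UNIV. cnj (mv (ct A) z k) * y k)"
    unfolding mv_def ct_def by (simp add: sum_distrib_right sum_distrib_left mult.commute)
  finally show ?thesis .
qed

lemma rng_closed:
  "(\<lambda>t. 0) \<in> rng M" "a \<in> rng M \<Longrightarrow> b \<in> rng M \<Longrightarrow> (\<lambda>t. a t + b t) \<in> rng M"
  "a \<in> rng M \<Longrightarrow> (\<lambda>t. c * a t) \<in> rng M"
proof -
  show "(\<lambda>t. 0) \<in> rng M" unfolding rng_def mv_def by (auto intro!: exI[where x="\<lambda>_. 0"])
next
  assume "a \<in> rng M" "b \<in> rng M"
  then obtain u v where "a = mv M u" "b = mv M v" by (auto simp: rng_def)
  then show "(\<lambda>t. a t + b t) \<in> rng M" unfolding rng_def mv_def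
    by (auto simp: sum.distrib[symmetric] distrib_left intro!: exI[where x="\<lambda>c. u c + v c"])
next
  assume "a \<in> rng M"
  then obtain u where "a = mv M u" by (auto simp: rng_def)
  then show "(\<lambda>t. c * a t) \<in> rng M" unfolding rng_def mv_def
    by (auto simp: sum_distrib_left mult.left_commute intro!: exI[where x="\<lambda>k. c * u k"])
qed

lemma sumsq_zero:
  fixes q :: "'k::finite \<Rightarrow> complex"
  assumes "Re (\<Sum>k\<in>UNIV. cnj (q k) * q k) = 0"
  shows "q = (\<lambda>k. 0)"
proof -
  have "(\<Sum>k\<in>UNIV. Re (q k) * Re (q k) + Im (q k) * Im (q k)) = 0"
    using assms by simp
  then have "\<forall>k\<in>UNIV. Re (q k) * Re (q k) + Im (q k) * Im (q k) = 0"
    by (subst (asm) sum_nonneg_eq_0_iff) (auto intro: add_nonneg_nonneg)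
  then show ?thesis by (auto simp: fun_eq_iff complex_eq_iff)
qed

lemma rng_AAs: "rng (mm A (ct A)) = rng A"
proof
  show "rng (mm A (ct A)) \<subseteq> rng A"
    by (auto simp: rng_def mv_mm)
next
  show "rng A \<subseteq> rng (mm A (ct A))"
  proof
    fix x assume x: "x \<in> rng A"
    obtain u z where u: "u \<in> rng (mm A (ct A))" and e: "x = (\<lambda>t. u t + z t)"
      and o: "\<And>w. w \<in> rng (mm A (ct A)) \<Longrightarrow> Re (\<Sum>t\<in>UNIV. cnj (z t) * w t) = 0"
    proof (rule decomp[of "rng (mm A (ct A))" x])
      show "(\<lambda>t. 0) \<in> rng (mm A (ct A))" by (rule rng_closed(1))
      show "\<And>a b. a \<in> rng (mm A (ct A)) \<Longrightarrow> b \<in> rng (mm A (ct A)) \<Longrightarrow> (\<lambda>t. a t + b t) \<in> rng (mm A (ct A))"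
        by (rule rng_closed(2))
      show "\<And>c a. a \<in> rng (mm A (ct A)) \<Longrightarrow> (\<lambda>t. c * a t) \<in> rng (mm A (ct A))"
        by (rule rng_closed(3))
    qed blast
    have zeq: "z = (\<lambda>t. x t + (-1) * u t)" using e by auto
    have "u \<in> rng A" using u by (auto simp: rng_def mv_mm)
    then have "(\<lambda>t. (-1) * u t) \<in> rng A" by (rule rng_closed(3))
    then have zr: "z \<in> rng A" unfolding zeq using x by (rule rng_closed(2)[rotated])
    have "Re (\<Sum>t\<in>UNIV. cnj (z t) * mv (mm A (ct A)) z t) = 0"
      using o[of "mv (mm A (ct A)) z"] by (auto simp: rng_def)
    then have "Re (\<Sum>k\<in>UNIV. cnj (mv (ct A) z k) * mv (ct A) z k) = 0"
      by (simp add: mv_mm adj_ident)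
    then have q0: "mv (ct A) z = (\<lambda>k. 0)" by (rule sumsq_zero)
    from zr obtain y where y: "z = mv A y" by (auto simp: rng_def)
    have "(\<Sum>t\<in>UNIV. cnj (z t) * z t) = 0"
      using adj_ident[of z A y] q0 y by simp
    then have "z = (\<lambda>t. 0)" by (intro sumsq_zero) simp
    then show "x \<in> rng (mm A (ct A))" using e u by simp
  qed
qed


definition sw :: "('a \<times> 'o \<Rightarrow> 'b \<times> 'o \<Rightarrow> complex) \<Rightarrow> ('a \<times> 'o \<Rightarrow> 'b \<times> 'o \<Rightarrow> complex)" where
  "sw x = (\<lambda>(i, p) (j, q). x (i, q) (j, p))"

lemma sw_sw[simp]: "sw (sw x) = x"
  by (simp add: sw_def fun_eq_iff split: prod.splits)

lemma id_pi_op_sw: "id_pi_op x = sw x"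
  by (simp add: sw_def id_pi_op_def pi_op_def fun_eq_iff split: prod.splits)

lemma sw_adj: "sw (adj x) = ct (sw x)"
  by (simp add: sw_def adj_def ct_def fun_eq_iff split: prod.splits)

lemma sum_pair: "(\<Sum>k\<in>UNIV. f k) = (\<Sum>b\<in>UNIV. \<Sum>s\<in>UNIV. f (b, s))"
proof -
  have "(\<Sum>k\<in>UNIV. f k) = (\<Sum>k\<in>UNIV \<times> UNIV. f k)" by simp
  also have "\<dots> = (\<Sum>b\<in>UNIV. \<Sum>s\<in>UNIV. f (b, s))"
    by (subst sum.cartesian_product) (simp add: case_prod_beta')
  finally show ?thesis .
qed

lemma sw_opmul_pt: "sw (opmul x y) (c, p) (a, q) = mm (sw x) (sw y) (c, p) (a, q)"
  unfolding mm_def by (subst sum_pair) (simp add: sw_def opmul_def)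

lemma sw_opmul: "sw (opmul x y) = mm (sw x) (sw y)"
  unfolding fun_eq_iff by (simp add: split_paired_All sw_opmul_pt)

lemma cspan_zero: "(\<lambda>t. 0) \<in> cspan S"
  unfolding cspan_def by (auto intro!: exI[where x="{}"])

lemma cspan_base: "x \<in> S \<Longrightarrow> x \<in> cspan S"
  unfolding cspan_def by (auto intro!: exI[where x="{x}"] exI[where x="\<lambda>_. 1"])

lemma cspan_add:
  assumes "a \<in> cspan S" "b \<in> cspan S"
  shows "(\<lambda>t. c * a t + b t) \<in> cspan S"
proof -
  obtain F1 f1 where 1: "finite F1" "F1 \<subseteq> S" "a = (\<lambda>t. \<Sum>x\<in>F1. f1 x * x t)"
    using assms(1) unfolding cspan_def by blast
  obtain F2 f2 where 2: "finite F2" "F2 \<subseteq> S" "b = (\<lambda>t. \<Sum>x\<in>F2. f2 x * x t)"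
    using assms(2) unfolding cspan_def by blast
  define f where "f x = c * (if x \<in> F1 then f1 x else 0) + (if x \<in> F2 then f2 x else 0)" for x
  have "(\<lambda>t. c * a t + b t) = (\<lambda>t. \<Sum>x\<in>F1 \<union> F2. f x * x t)"
  proof
    fix t
    have e1: "(\<Sum>x\<in>F1 \<union> F2. (if x \<in> F1 then f1 x else 0) * x t) = (\<Sum>x\<in>F1. f1 x * x t)"
      by (rule sum.mono_neutral_cong_right) (use 1 2 in auto)
    have e2: "(\<Sum>x\<in>F1 \<union> F2. (if x \<in> F2 then f2 x else 0) * x t) = (\<Sum>x\<in>F2. f2 x * x t)"
      by (rule sum.mono_neutral_cong_right) (use 1 2 in auto)
    show "c * a t + b t = (\<Sum>x\<in>F1 \<union> F2. f x * x t)"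
      unfolding f_def distrib_right sum.distrib 1(3) 2(3) e1[symmetric] e2[symmetric]
      by (simp add: sum_distrib_left mult.assoc)
  qed
  then show ?thesis unfolding cspan_def using 1 2 by blast
qed

lemma cspan_sum:
  assumes "finite I" "\<And>x. x \<in> I \<Longrightarrow> g x \<in> cspan S"
  shows "(\<lambda>t. \<Sum>x\<in>I. c x * g x t) \<in> cspan S"
  using assms
proof (induction I rule: finite_induct)
  case empty then show ?case using cspan_zero by simp
next
  case (insert y I)
  then have "(\<lambda>t. c y * g y t + (\<Sum>x\<in>I. c x * g x t)) \<in> cspan S"
    using cspan_add[of "g y" S "\<lambda>t. \<Sum>x\<in>I. c x * g x t" "c y"] by auto
  then show ?case using insert by simp
qed

lemma main_lin:
  fixes A :: "'n::finite \<Rightarrow> 'm::finite \<Rightarrow> complex"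
  shows "hs_ident ` {mm (mm A Y) (ct A) | Y. True}
     = cspan {tensor_conj v u | v u. v \<in> rng A \<and> u \<in> rng A}"
    (is "?T = cspan ?S")
proof
  show "?T \<subseteq> cspan ?S"
  proof
    fix y assume "y \<in> ?T"
    then obtain Y where y: "y = hs_ident (mm (mm A Y) (ct A))" by auto
    have "y = (\<lambda>t. \<Sum>p\<in>UNIV. Y (fst p) (snd p) * tensor_conj (\<lambda>r. A r (fst p)) (\<lambda>r. A r (snd p)) t)"
    proof
      fix t :: "'n \<times> 'n"
      obtain r c where t: "t = (r, c)" by fastforce
      have "y t = (\<Sum>k\<in>UNIV. \<Sum>a\<in>UNIV. Y a k * (A r a * cnj (A c k)))"
        unfolding y t hs_ident_def mm_def ct_def
        by (simp add: sum_distrib_right sum_distrib_left ac_simps)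
      also have "\<dots> = (\<Sum>a\<in>UNIV. \<Sum>k\<in>UNIV. Y a k * (A r a * cnj (A c k)))" by (rule sum.swap)
      also have "\<dots> = (\<Sum>p\<in>UNIV. Y (fst p) (snd p) * tensor_conj (\<lambda>r. A r (fst p)) (\<lambda>r. A r (snd p)) t)"
        unfolding t tensor_conj_def
        by (simp add: UNIV_Times_UNIV[symmetric] sum.cartesian_product case_prod_beta del: UNIV_Times_UNIV)
      finally show "y t = (\<Sum>p\<in>UNIV. Y (fst p) (snd p) * tensor_conj (\<lambda>r. A r (fst p)) (\<lambda>r. A r (snd p)) t)" .
    qed
    moreover have col: "(\<lambda>r. A r a) \<in> rng A" for a
        unfolding rng_def mv_def
        by (auto intro!: exI[where x="\<lambda>k. if k = a then 1 else 0"] simp: if_distrib cong: if_cong)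
    moreover have "tensor_conj (\<lambda>r. A r (fst p)) (\<lambda>r. A r (snd p)) \<in> cspan ?S" for p
      by (rule cspan_base) (use col in blast)
    ultimately show "y \<in> cspan ?S" by (auto intro!: cspan_sum)
  qed
next
  have lin: "mm (mm A (\<lambda>a b. c * Y1 a b + Y2 a b)) (ct A) = (\<lambda>r s. c * mm (mm A Y1) (ct A) r s + mm (mm A Y2) (ct A) r s)"
    for c Y1 Y2
    unfolding mm_def by (simp add: algebra_simps sum.distrib sum_distrib_left)
  have cl: "finite F \<Longrightarrow> F \<subseteq> ?T \<Longrightarrow> (\<lambda>t. \<Sum>x\<in>F. f x * x t) \<in> ?T" for F f
  proof (induction F rule: finite_induct)
    case empty
    have "hs_ident (mm (mm A (\<lambda>a b. 0)) (ct A)) = (\<lambda>t. 0)"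
      by (simp add: hs_ident_def mm_def fun_eq_iff)
    then show ?case by (auto intro!: image_eqI[where x="mm (mm A (\<lambda>a b. 0)) (ct A)"])
  next
    case (insert x F)
    then obtain Y1 Y2 where "x = hs_ident (mm (mm A Y1) (ct A))"
      "(\<lambda>t. \<Sum>x\<in>F. f x * x t) = hs_ident (mm (mm A Y2) (ct A))" by auto
    then have "(\<lambda>t. \<Sum>x\<in>insert x F. f x * x t) = hs_ident (mm (mm A (\<lambda>a b. f x * Y1 a b + Y2 a b)) (ct A))"
      using insert(1,2) unfolding lin
      by (simp add: hs_ident_def fun_eq_iff split: prod.splits)
    then show ?case by auto
  qed
  show "cspan ?S \<subseteq> ?T"
  proof
    fix y assume "y \<in> cspan ?S"
    then obtain F f where F: "finite F" "F \<subseteq> ?S" "y = (\<lambda>t. \<Sum>x\<in>F. f x * x t)"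
      unfolding cspan_def by blast
    have "?S \<subseteq> ?T"
    proof
      fix x assume "x \<in> ?S"
      then obtain v u where x: "x = tensor_conj (mv A v) (mv A u)" by (auto simp: rng_def)
      have "x = hs_ident (mm (mm A (\<lambda>a b. v a * cnj (u b))) (ct A))"
        unfolding x tensor_conj_def hs_ident_def mm_def mv_def ct_def
        by (simp add: fun_eq_iff sum_distrib_left sum_distrib_right mult.commute mult.left_commute)
      then show "x \<in> ?T" by auto
    qed
    then show "y \<in> ?T" using cl F by auto
  qed
qed


lemma ct_ct[simp]: "ct (ct M) = M" by (simp add: ct_def)

lemma range_op_rng: "range_op D = rng D" by (simp add: range_op_def rng_def mv_def)

theorem proposition3p19:
  fixes \<Phi> :: "('i::finite \<Rightarrow> 'i \<Rightarrow> complex) \<Rightarrow> ('o::finite \<Rightarrow> 'o \<Rightarrow> complex)"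
    and W :: "'l::finite \<times> 'o \<Rightarrow> 'i \<times> 'o \<Rightarrow> complex"
  assumes "quantum_channel \<Phi>"
    and "stinespring_map \<Phi> W"
  shows "hs_ident ` id_pi_op ` conf_multigraph \<Phi> W
           = tensor_with_conj (range_op (id_pi_op (choi_op \<Phi>)))"
proof -
  define A where "A = ct (sw W)"
  have cA: "ct A = sw W" by (simp add: A_def)
  have "id_pi_op ` conf_multigraph \<Phi> W = {mm (mm A Y) (ct A) | Y. True}"
  proof -
    have "id_pi_op ` conf_multigraph \<Phi> W = (\<lambda>X. mm (mm A (sw X)) (ct A)) ` UNIV"
    proof -
      have "conf_multigraph \<Phi> W = (\<lambda>X. opmul (opmul (adj W) X) W) ` UNIV"
        by (auto simp: conf_multigraph_def)
      then show ?thesis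
        by (simp add: image_image id_pi_op_sw cA sw_opmul sw_adj A_def)
    qed
    also have "\<dots> = {mm (mm A Y) (ct A) | Y. True}"
      by (auto intro!: image_eqI[where x="sw Y" for Y])
    finally show ?thesis .
  qed
  moreover have "range_op (id_pi_op (choi_op \<Phi>)) = rng A"
  proof -
    have "id_pi_op (choi_op \<Phi>) = sw (opmul (adj W) W)"
      using assms(2) unfolding stinespring_map_def id_pi_op_sw by simp
    also have "\<dots> = mm A (ct A)" unfolding sw_opmul sw_adj cA A_def by simp
    finally show ?thesis by (simp add: range_op_rng rng_AAs)
  qed
  ultimately show ?thesis unfolding tensor_with_conj_def using main_lin[of A] by simp
qed

end
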